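(* Assume $(H_S(\infty))$, and for $\lambda\in(0,1]$ let $\mathbf a_\lambda>0$ be the unique solution of $\lambda\mathbf a_\lambda=\nu_S((\mathbf a_\lambda,\infty))$ and $\mathbf n_\lambda=\lfloor 1/(\lambda\mathbf a_\lambda)\rfloor$. Then there exists a function $\lambda\mapsto\mathbf m_\lambda$ from $(0,1]$ to $\mathbb{N}$ which is non-increasing and satisfies $\lim_{\lambda\to0}\mathbf m_\lambda=\infty$, $\lim_{\lambda\to0}\mathbf m_\lambda/\mathbf n_\lambda=0$, and for every $z\in[0,1)$, $\lim_{\lambda\to0}\mathbf m_\lambda\,\nu_S((\mathbf a_\lambda z,\infty))=\infty$.
   Context: $(H_S(\infty))$: $\mu_S$ is a probability measure on $(0,\infty)$ with unbounded support and finite mean $m_S$; with $\nu_S(dt)=m_S^{-1}\mu_S((t,\infty))dt$, for all $t>0$, $\lim_{x\to\infty}\nu_S((x,\infty))/\nu_S((tx,\infty))=t^\infty$, where $t^\infty=0$ for $t<1$, $1^\infty=1$, $t^\infty=\infty$ for $t>1$. (The map $a\mapsto a/\nu_S((a,\infty))$ is an increasing continuous bijection of $(0,\infty)$, so $\mathbf a_\lambda$ is well defined and $\mathbf a_\lambda\to\infty$ as $\lambda\to0$.) *)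

theory Defs
  imports "HOL-Probability.Probability"
begin

definition mean_S :: "real measure \<Rightarrow> real" where
  "mean_S mu = (\<integral>x. x \<partial>mu)"

text \<open>Tail of the stationary-excess law: nu_S((x,oo)) = m_S^{-1} int_x^oo mu_S((s,oo)) ds.\<close>
definition nu_tail :: "real measure \<Rightarrow> real \<Rightarrow> real" where
  "nu_tail mu x = (LBINT s:{x<..}. measure mu {s<..}) / mean_S mu"

definition H_S_inf :: "real measure \<Rightarrow> bool" where
  "H_S_inf mu \<longleftrightarrow>
     prob_space mu \<and> sets mu = sets borel \<and>
     measure mu {..0} = 0 \<and>
     (\<forall>x. measure mu {x<..} > 0) \<and>
     integrable mu (\<lambda>x. x) \<and>
     (\<forall>t>0. (t < 1 \<longrightarrow> ((\<lambda>x. nu_tail mu x / nu_tail mu (t * x)) \<longlongrightarrow> 0) at_top) \<and>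
            (t = 1 \<longrightarrow> ((\<lambda>x. nu_tail mu x / nu_tail mu (t * x)) \<longlongrightarrow> 1) at_top) \<and>
            (t > 1 \<longrightarrow> filterlim (\<lambda>x. nu_tail mu x / nu_tail mu (t * x)) at_top at_top))"

definition a_lam :: "real measure \<Rightarrow> real \<Rightarrow> real" where
  "a_lam mu l = (THE a. a > 0 \<and> l * a = nu_tail mu a)"

definition n_lam :: "real measure \<Rightarrow> real \<Rightarrow> nat" where
  "n_lam mu l = nat \<lfloor>1 / (l * a_lam mu l)\<rfloor>"

end

theory Submission
  imports Defs
begin

lemma diag_lemma:
  fixes P :: "nat \<Rightarrow> real \<Rightarrow> bool"
  assumes "\<forall>k. eventually (P k) at_top"
  shows "\<exists>K::real\<Rightarrow>nat. filterlim K at_top at_top \<and> eventually (\<lambda>x. P (K x) x) at_top"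
proof -
  from assms have "\<forall>k. \<exists>A. \<forall>x\<ge>A. P k x" by (simp add: eventually_at_top_linorder)
  then obtain A where A: "\<And>k x. x \<ge> A k \<Longrightarrow> P k x" by metis
  define S where "S x = {k. k \<le> nat \<lceil>x\<rceil> \<and> (\<forall>j\<le>k. A j \<le> x)}" for x
  define K where "K x = Max (S x)" for x
  have fin: "finite (S x)" for x unfolding S_def
    by (rule finite_subset[of _ "{..nat \<lceil>x\<rceil>}"]) auto
  have mem: "K x \<in> S x" if "x \<ge> A 0" for x
  proof -
    have "0 \<in> S x" using that by (simp add: S_def)
    thus ?thesis unfolding K_def using fin Max_in by blast
  qed
  have ev: "eventually (\<lambda>x. P (K x) x) at_top"
    using eventually_ge_at_top[of "A 0"]
  proof eventually_elim
    case (elim x)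
    then have "K x \<in> S x" by (rule mem)
    then show ?case using A unfolding S_def by auto
  qed
  have lim: "filterlim K at_top at_top"
    unfolding filterlim_at_top
  proof
    fix Z :: nat
    have "eventually (\<lambda>x. x \<ge> max (real Z) (Max (A ` {..Z}))) at_top" by (rule eventually_ge_at_top)
    then show "eventually (\<lambda>x. K x \<ge> Z) at_top"
    proof eventually_elim
      case (elim x)
      have "Z \<in> S x" unfolding S_def
      proof safe
        show "Z \<le> nat \<lceil>x\<rceil>" using elim by linarith
        fix j assume "j \<le> Z" then have "A j \<le> Max (A ` {..Z})" by (intro Max_ge) auto
        thus "A j \<le> x" using elim by linarith
      qed
      thus "Z \<le> K x" unfolding K_def using fin Max_ge by blast
    qed
  qed
  show ?thesis using ev lim by blast
qed

lemma nat_floor_le_aux: "0 \<le> (u::real) \<Longrightarrow> real (nat \<lfloor>u\<rfloor>) \<le> u"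
  by linarith

lemma core_lemma:
  fixes N a :: "real \<Rightarrow> real"
  assumes Npos: "\<And>x. N x > 0"
   and Nanti: "\<And>x y. x \<le> y \<Longrightarrow> N y \<le> N x"
   and Nrat: "\<And>t. 0 < t \<Longrightarrow> t < 1 \<Longrightarrow> ((\<lambda>x. N x / N (t*x)) \<longlongrightarrow> 0) at_top"
   and aeq: "eventually (\<lambda>l. a l > 0 \<and> l * a l = N (a l)) (at_right 0)"
   and alim: "filterlim a at_top (at_right 0)"
   and amono: "eventually (\<lambda>l. \<forall>l'. 0<l' \<and> l' \<le> l \<longrightarrow> a l \<le> a l') (at_right 0)"
  shows "\<exists>m :: real \<Rightarrow> nat.
     (\<forall>l1 l2. 0 < l1 \<and> l1 \<le> l2 \<and> l2 \<le> 1 \<longrightarrow> m l2 \<le> m l1) \<and>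
     filterlim (\<lambda>l. real (m l)) at_top (at_right 0) \<and>
     ((\<lambda>l. real (m l) / real (nat \<lfloor>1 / (l * a l)\<rfloor>)) \<longlongrightarrow> 0) (at_right 0) \<and>
     (\<forall>z. 0 \<le> z \<and> z < 1 \<longrightarrow>
        filterlim (\<lambda>l. real (m l) * N (a l * z)) at_top (at_right 0))"
proof -
  define zz where "zz k = 1 - 1/(real k + 2)" for k :: nat
  have zz0: "0 < zz k" "zz k < 1" for k unfolding zz_def by (auto simp: field_simps)
  have zzmono: "zz k \<le> zz k'" if "k \<le> k'" for k k'
    unfolding zz_def using that by (auto intro!: divide_left_mono)
  have "\<forall>k. eventually (\<lambda>x. N x / N (zz k * x) \<le> 1/(real k+1)^2) at_top"
  proof
    fix k
    have "eventually (\<lambda>x. N x / N (zz k * x) < 1/(real k+1)^2) at_top"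
      by (rule order_tendstoD(2)[OF Nrat[OF zz0]]) auto
    then show "eventually (\<lambda>x. N x / N (zz k * x) \<le> 1/(real k+1)^2) at_top"
      by eventually_elim simp
  qed
  from diag_lemma[OF this] obtain K :: "real \<Rightarrow> nat" where
    Klim: "filterlim K at_top at_top" and
    KP: "eventually (\<lambda>x. N x / N (zz (K x) * x) \<le> 1/(real (K x)+1)^2) at_top"
    by blast
  have Nhalf: "eventually (\<lambda>x. N x \<le> 1/2) at_top"
  proof -
    have "eventually (\<lambda>x. N x / N ((1/2) * x) < 1/(2 * N 0 + 1)) at_top"
      by (rule order_tendstoD(2)[OF Nrat]) (use Npos[of 0] in auto)
    moreover have "eventually (\<lambda>x::real. x \<ge> 0) at_top" by (rule eventually_ge_at_top)
    ultimately show ?thesis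
    proof eventually_elim
      case (elim x)
      have p1: "N ((1/2) * x) > 0" "N 0 > 0" by (rule Npos)+
      have "N ((1/2)*x) \<le> N 0" using elim by (intro Nanti) auto
      have "N x < N ((1/2) * x) / (2 * N 0 + 1)"
        using elim(1) p1 by (simp add: field_simps)
      also have "\<dots> \<le> N 0 / (2 * N 0 + 1)"
        using \<open>N ((1/2)*x) \<le> N 0\<close> p1 by (intro divide_right_mono) auto
      also have "\<dots> \<le> 1/2" using p1 by (simp add: field_simps)
      finally show ?case by simp
    qed
  qed
  have KAlim: "filterlim (\<lambda>l. K (a l)) at_top (at_right 0)"
    by (rule filterlim_compose[OF Klim alim])
  have rKAlim: "filterlim (\<lambda>l. real (K (a l))) at_top (at_right 0)"
    by (rule filterlim_compose[OF filterlim_real_sequentially KAlim])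
  have KPa: "eventually (\<lambda>l. N (a l) / N (zz (K (a l)) * a l) \<le> 1/(real (K (a l))+1)^2) (at_right 0)"
    by (rule eventually_compose_filterlim[OF KP alim])
  have Nhalfa: "eventually (\<lambda>l. N (a l) \<le> 1/2) (at_right 0)"
    by (rule eventually_compose_filterlim[OF Nhalf alim])
  define f where "f l = nat \<lfloor>1 / (N (a l) * (real (K (a l)) + 1))\<rfloor>" for l
  define m where "m l = Inf (f ` {0<..l})" for l
  have mmono: "m l2 \<le> m l1" if "0 < l1" "l1 \<le> l2" for l1 l2
    unfolding m_def using that by (intro cInf_superset_mono) auto
  have mle: "m l \<le> f l" if "0 < l" for l
    unfolding m_def using that by (intro cInf_lower) auto
  have mex: "\<exists>l'. 0 < l' \<and> l' \<le> l \<and> m l = f l'" if "0 < l" for l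
  proof -
    have "m l \<in> f ` {0<..l}" unfolding m_def using that by (intro Inf_nat_def1) auto
    thus ?thesis by auto
  qed
  have fz: "filterlim (\<lambda>l. real (f l) * N (a l * z)) at_top (at_right 0)"
    if z: "0 \<le> z" "z < 1" for z
  proof -
    define k0 where "k0 = nat \<lceil>1/(1-z)\<rceil>"
    have "zz k0 \<ge> z"
    proof -
      have "real k0 + 2 \<ge> 1/(1-z)" unfolding k0_def by linarith
      hence "1/(real k0 + 2) \<le> 1/(1/(1-z))" using z by (intro divide_left_mono) auto
      thus ?thesis unfolding zz_def using z by simp
    qed
    have evK: "eventually (\<lambda>l. K (a l) \<ge> k0) (at_right 0)"
      using KAlim by (simp add: filterlim_at_top)
    have lim1: "filterlim (\<lambda>l. (1 - N 0) + real (K (a l))) at_top (at_right 0)"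
      by (rule filterlim_tendsto_add_at_top[OF tendsto_const rKAlim])
    show ?thesis
    proof (rule filterlim_at_top_mono[OF lim1])
      show "eventually (\<lambda>l. (1 - N 0) + real (K (a l)) \<le> real (f l) * N (a l * z)) (at_right 0)"
        using evK KPa aeq
      proof eventually_elim
        case (elim l)
        define A where "A = a l"
        define k where "k = K A"
        have A0: "A > 0" using elim A_def by auto
        have kk: "k \<ge> k0" using elim unfolding k_def A_def by auto
        have zk: "z \<le> zz k" using \<open>zz k0 \<ge> z\<close> zzmono[OF kk] by linarith
        have NA: "N A > 0" "N (zz k * A) > 0" "N (A * z) > 0" by (rule Npos)+
        have rat: "N A / N (zz k * A) \<le> 1/(real k+1)^2" using elim unfolding k_def A_def by auto
        have h1: "N (zz k * A) \<ge> (real k + 1)^2 * N A"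
          using rat NA by (simp add: field_simps)
        have h2: "N (A * z) \<ge> N (zz k * A)"
          using zk A0 by (intro Nanti) (simp add: mult.commute mult_left_mono)
        have h3: "N (A * z) \<le> N 0" using A0 z by (intro Nanti) simp
        define u where "u = 1 / (N A * (real k + 1))"
        have fu: "real (f l) \<ge> u - 1" unfolding f_def u_def k_def A_def by linarith
        have u0: "u > 0" unfolding u_def using NA by simp
        have "N (A*z) \<ge> (real k+1)^2 * N A" using h1 h2 by linarith
        hence "u * N (A * z) \<ge> u * ((real k+1)^2 * N A)" using u0 by (intro mult_left_mono) auto
        moreover have "u * ((real k+1)^2 * N A) = real k + 1"
        proof -
          have nz: "N A * (real k + 1) \<noteq> 0" using NA by simp
          have "u * ((real k+1)^2 * N A) = ((N A * (real k + 1)) * (real k + 1)) / (N A * (real k + 1))"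
            unfolding u_def power2_eq_square by (simp add: ac_simps)
          also have "\<dots> = real k + 1" using nz by simp
          finally show ?thesis .
        qed
        ultimately have "u * N (A * z) \<ge> real k + 1" by simp
        moreover have "real (f l) * N (A * z) \<ge> (u - 1) * N (A * z)"
          using fu NA by (intro mult_right_mono) auto
        ultimately have "real (f l) * N (A * z) \<ge> real k + 1 - N (A * z)"
          by (simp add: algebra_simps)
        thus ?case using h3 unfolding k_def A_def by linarith
      qed
    qed
  qed
  have mz: "filterlim (\<lambda>l. real (m l) * N (a l * z)) at_top (at_right 0)"
    if z: "0 \<le> z" "z < 1" for z
    unfolding filterlim_at_top
  proof
    fix B :: real
    have "eventually (\<lambda>l. B \<le> real (f l) * N (a l * z)) (at_right 0)"
      using fz[OF z] by (simp add: filterlim_at_top)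
    then obtain b1 where b1: "b1 > 0" "\<And>l. 0 < l \<Longrightarrow> l < b1 \<Longrightarrow> B \<le> real (f l) * N (a l * z)"
      by (auto simp: eventually_at_right_field)
    from amono obtain b2 where b2: "b2 > 0"
      "\<And>l. 0 < l \<Longrightarrow> l < b2 \<Longrightarrow> \<forall>l'. 0<l' \<and> l' \<le> l \<longrightarrow> a l \<le> a l'"
      by (auto simp: eventually_at_right_field)
    show "eventually (\<lambda>l. B \<le> real (m l) * N (a l * z)) (at_right 0)"
      unfolding eventually_at_right_field
    proof (intro exI[of _ "min b1 b2"] conjI allI impI)
      show "0 < min b1 b2" using b1 b2 by simp
      fix l :: real assume l: "0 < l" "l < min b1 b2"
      obtain l' where l': "0 < l'" "l' \<le> l" "m l = f l'" using mex[OF l(1)] by blast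
      have "a l \<le> a l'" using b2(2)[of l] l l' by auto
      hence "N (a l' * z) \<le> N (a l * z)" using z by (intro Nanti mult_right_mono) auto
      hence "real (f l') * N (a l' * z) \<le> real (f l') * N (a l * z)"
        by (intro mult_left_mono) auto
      moreover have "B \<le> real (f l') * N (a l' * z)" using b1(2)[of l'] l l' by auto
      ultimately show "B \<le> real (m l) * N (a l * z)" using l' by simp
    qed
  qed
  have mlim: "filterlim (\<lambda>l. real (m l)) at_top (at_right 0)"
  proof -
    have "filterlim (\<lambda>l. (1 / N 0) * (real (m l) * N (a l * 0))) at_top (at_right 0)"
      by (rule filterlim_tendsto_pos_mult_at_top[OF tendsto_const _ mz]) (use Npos[of 0] in auto)
    thus ?thesis using Npos[of 0] by simp
  qed
  have mn: "((\<lambda>l. real (m l) / real (nat \<lfloor>1 / (l * a l)\<rfloor>)) \<longlongrightarrow> 0) (at_right 0)"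
  proof (rule tendsto_sandwich[of "\<lambda>_. 0" _ _ "\<lambda>l. 2 * inverse (real (K (a l)) + 1)"])
    show "eventually (\<lambda>l. 0 \<le> real (m l) / real (nat \<lfloor>1 / (l * a l)\<rfloor>)) (at_right 0)"
      by simp
    show "((\<lambda>_. 0::real) \<longlongrightarrow> 0) (at_right 0)" by simp
    have "filterlim (\<lambda>l. real (K (a l)) + 1) at_top (at_right 0)"
      using filterlim_tendsto_add_at_top[OF tendsto_const rKAlim, of 1] by (simp add: add.commute)
    hence "((\<lambda>l. inverse (real (K (a l)) + 1)) \<longlongrightarrow> 0) (at_right 0)"
      by (rule tendsto_inverse_0_at_top)
    thus "((\<lambda>l. 2 * inverse (real (K (a l)) + 1)) \<longlongrightarrow> 0) (at_right 0)"
      using tendsto_mult_right_zero by blast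
    have pos: "eventually (\<lambda>l. 0 < l) (at_right (0::real))" by (simp add: eventually_at_right_field) (auto intro: exI[of _ 1])
    show "eventually (\<lambda>l. real (m l) / real (nat \<lfloor>1 / (l * a l)\<rfloor>) \<le> 2 * inverse (real (K (a l)) + 1)) (at_right 0)"
      using aeq Nhalfa pos
    proof eventually_elim
      case (elim l)
      define v where "v = 1 / N (a l)"
      define k where "k = real (K (a l))"
      have NA: "N (a l) > 0" by (rule Npos)
      have v2: "v \<ge> 2" using elim NA unfolding v_def by (simp add: field_simps)
      have nv: "real (nat \<lfloor>1 / (l * a l)\<rfloor>) \<ge> v / 2"
      proof -
        have "1 / (l * a l) = v" using elim unfolding v_def by simp
        hence "real (nat \<lfloor>1 / (l * a l)\<rfloor>) \<ge> v - 1" using v2 by linarith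
        thus ?thesis using v2 by linarith
      qed
      have k0': "k \<ge> 0" unfolding k_def by simp
      have fm: "real (m l) \<le> v / (k + 1)"
      proof -
        have "real (m l) \<le> real (f l)" using mle elim by auto
        also have "\<dots> \<le> 1 / (N (a l) * (k + 1))" unfolding f_def k_def
          using NA k0' by (intro nat_floor_le_aux) simp
        also have "\<dots> = v / (k+1)" unfolding v_def by simp
        finally show ?thesis .
      qed
      have k0: "k \<ge> 0" unfolding k_def by simp
      have "real (m l) / real (nat \<lfloor>1 / (l * a l)\<rfloor>) \<le> (v / (k + 1)) / (v / 2)"
        using fm nv v2 k0 by (intro frac_le) auto
      also have "\<dots> = 2 * inverse (k + 1)"
      proof -
        have "v \<noteq> 0" "k + 1 \<noteq> 0" using v2 k0 by auto
        thus ?thesis by (simp add: divide_simps)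
      qed
      finally show ?case unfolding k_def .
    qed
  qed
  show ?thesis
    by (intro exI[of _ m] conjI allI impI mlim mn mz) (use mmono in auto)
qed


lemma H_props:
  assumes H: "H_S_inf mu"
  shows "(\<forall>x. nu_tail mu x > 0) \<and> (\<forall>x y. x \<le> y \<longrightarrow> nu_tail mu y \<le> nu_tail mu x)
     \<and> continuous_on UNIV (nu_tail mu)"
proof -
  let ?g = "\<lambda>s. measure mu {s<..}"
  define I where "I x = (LBINT s:{x<..}. measure mu {s<..})" for x
  have ps: "prob_space mu" and sm: "sets mu = sets borel" and m0: "measure mu {..0} = 0"
    using H unfolding H_S_inf_def by auto
  have rat1: "((\<lambda>x. nu_tail mu x / nu_tail mu (1 * x)) \<longlongrightarrow> 1) at_top"
    using H zero_less_one unfolding H_S_inf_def by blast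
  interpret prob_space mu by (rule ps)
  have gle1: "?g s \<le> 1" for s by (rule prob_le_1)
  have gge0: "?g s \<ge> 0" for s by simp
  have ganti: "?g t \<le> ?g s" if "s \<le> t" for s t
    by (rule finite_measure_mono) (use that in \<open>auto simp: sm\<close>)
  have gmeas: "?g \<in> borel_measurable borel"
  proof -
    have "mono (\<lambda>s. - ?g s)" using ganti by (auto simp: mono_def)
    hence "(\<lambda>s. - ?g s) \<in> borel_measurable borel" by (rule borel_measurable_mono)
    hence "(\<lambda>s. - (- ?g s)) \<in> borel_measurable borel" by (rule borel_measurable_uminus)
    thus ?thesis by simp
  qed
  have const_int: "set_integrable lborel {x<..y} (\<lambda>_. c::real)" for x y :: real and c
  proof -
    have "emeasure lborel {x<..y} < \<infinity>"
      by (cases "x \<le> y") (auto simp: ennreal_less_top not_le)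
    hence "integrable lborel (indicat_real {x<..y})" by (intro integrable_real_indicator) auto
    thus ?thesis unfolding set_integrable_def by (simp add: integrable_mult_left integrable_mult_right)
  qed
  have gfin: "set_integrable lborel {x<..y} ?g" for x y
  proof (rule set_integrable_bound[where f="\<lambda>_. 1::real"])
    show "set_integrable lborel {x<..y} (\<lambda>_. 1::real)" by (rule const_int)
    show "set_borel_measurable lborel {x<..y} ?g" unfolding set_borel_measurable_def
      using gmeas by measurable
    show "AE s in lborel. s \<in> {x<..y} \<longrightarrow> norm (?g s) \<le> norm (1::real)"
      using gle1 by auto
  qed
  have "eventually (\<lambda>x. nu_tail mu x / nu_tail mu (1*x) > 1/2) at_top"
    by (rule order_tendstoD(1)[OF rat1]) simp
  then obtain x0 where "nu_tail mu x0 / nu_tail mu (1*x0) > 1/2"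
    by (auto simp: eventually_at_top_linorder)
  hence nz: "nu_tail mu x0 \<noteq> 0" by auto
  hence mean_nz: "mean_S mu \<noteq> 0" and Inz: "I x0 \<noteq> 0" unfolding nu_tail_def I_def by auto
  have int0: "set_integrable lborel {x0<..} ?g"
    using Inz not_integrable_integral_eq unfolding I_def set_lebesgue_integral_def set_integrable_def
    by blast
  have gint: "set_integrable lborel {x<..} ?g" for x
  proof (cases "x0 \<le> x")
    case True then show ?thesis by (intro set_integrable_subset[OF int0]) auto
  next
    case False
    have "{x<..} = {x<..x0} \<union> {x0<..}" using False by auto
    thus ?thesis using set_integrable_Un[OF gfin int0] by auto
  qed
  have split: "I x = (LBINT s:{x<..y}. ?g s) + I y" if "x < y" for x y
  proof -
    have "{x<..} = {x<..y} \<union> {y<..}" using that by auto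
    moreover have "{x<..y} \<inter> {y<..} = {}" by auto
    ultimately show ?thesis unfolding I_def using set_integral_Un[OF _ gfin gint, of x y y] by simp
  qed
  have Jle: "(LBINT s:{x<..y}. ?g s) \<le> y - x" if "x<y" for x y
  proof -
    have "(LBINT s:{x<..y}. ?g s) \<le> (LBINT s:{x<..y}. (1::real))"
      by (rule set_integral_mono[OF gfin const_int]) (use gle1 in auto)
    also have "\<dots> = y - x" using that by (simp add: set_integral_const)
    finally show ?thesis .
  qed
  have Jge: "?g y * (y - x) \<le> (LBINT s:{x<..y}. ?g s)" if "x<y" for x y
  proof -
    have "(LBINT s:{x<..y}. ?g y) \<le> (LBINT s:{x<..y}. ?g s)"
      by (rule set_integral_mono[OF const_int gfin]) (use ganti in auto)
    moreover have "(LBINT s:{x<..y}. ?g y) = ?g y * (y - x)" using that by (simp add: set_integral_const)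
    ultimately show ?thesis by simp
  qed
  have Inonneg: "I x \<ge> 0" for x
    unfolding I_def set_lebesgue_integral_def by (rule integral_nonneg_AE) (auto simp: indicator_def)
  have mean_pos: "mean_S mu > 0"
  proof -
    have "AE x in mu. 0 \<le> x"
    proof (rule AE_I'[of "{..0}"])
      show "{..0} \<in> null_sets mu"
        using m0 by (simp add: null_sets_def sm emeasure_eq_measure)
      show "{x \<in> space mu. \<not> 0 \<le> x} \<subseteq> {..0::real}" by auto
    qed
    then have "mean_S mu \<ge> 0" unfolding mean_S_def by (rule integral_nonneg_AE)
    with mean_nz show ?thesis by simp
  qed
  have Ndef: "nu_tail mu x = I x / mean_S mu" for x by (simp add: nu_tail_def I_def)
  have Ipos: "I x > 0" for x
  proof -
    have "I x = (LBINT s:{x<..x+1}. ?g s) + I (x+1)" by (rule split) simp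
    moreover have "?g (x+1) * ((x+1) - x) \<le> (LBINT s:{x<..x+1}. ?g s)" by (rule Jge) simp
    moreover have "?g (x+1) > 0" using H unfolding H_S_inf_def by auto
    ultimately show ?thesis using Inonneg[of "x+1"] by simp
  qed
  have Idiff: "0 \<le> I x - I y \<and> I x - I y \<le> y - x" if "x \<le> y" for x y
  proof (cases "x = y")
    case False
    hence xy: "x < y" using that by simp
    have "0 \<le> ?g y * (y - x)" using xy by simp
    thus ?thesis using split[OF xy] Jle[OF xy] Jge[OF xy] by linarith
  qed simp
  have P1: "\<forall>x. nu_tail mu x > 0" using Ipos mean_pos by (simp add: Ndef)
  have P2: "\<forall>x y. x \<le> y \<longrightarrow> nu_tail mu y \<le> nu_tail mu x"
    using Idiff mean_pos by (auto simp: Ndef intro!: divide_right_mono)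
  have dist_le: "dist (nu_tail mu x) (nu_tail mu y) \<le> (1 / mean_S mu) * dist x y" for x y
  proof -
    have "\<bar>I x - I y\<bar> \<le> \<bar>x - y\<bar>"
      using Idiff[of x y] Idiff[of y x] by (cases "x \<le> y") auto
    hence "\<bar>I x - I y\<bar> / mean_S mu \<le> \<bar>x - y\<bar> / mean_S mu"
      using mean_pos by (intro divide_right_mono) auto
    moreover have "dist (nu_tail mu x) (nu_tail mu y) = \<bar>I x - I y\<bar> / mean_S mu"
      using mean_pos by (simp add: Ndef dist_real_def diff_divide_distrib[symmetric])
    ultimately show ?thesis by (simp add: dist_real_def)
  qed
  have "(1 / mean_S mu)-lipschitz_on UNIV (nu_tail mu)"
    unfolding lipschitz_on_def using dist_le mean_pos by auto
  hence P3: "continuous_on UNIV (nu_tail mu)" by (rule lipschitz_on_continuous_on)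
  show ?thesis using P1 P2 P3 by blast
qed

theorem mainTheorem3:
  fixes mu :: "real measure"
  assumes "H_S_inf mu"
  shows "\<exists>m :: real \<Rightarrow> nat.
     (\<forall>l1 l2. 0 < l1 \<and> l1 \<le> l2 \<and> l2 \<le> 1 \<longrightarrow> m l2 \<le> m l1) \<and>
     filterlim (\<lambda>l. real (m l)) at_top (at_right 0) \<and>
     ((\<lambda>l. real (m l) / real (n_lam mu l)) \<longlongrightarrow> 0) (at_right 0) \<and>
     (\<forall>z. 0 \<le> z \<and> z < 1 \<longrightarrow>
        filterlim (\<lambda>l. real (m l) * nu_tail mu (a_lam mu l * z)) at_top (at_right 0))"
proof -
  define N where "N = nu_tail mu"
  have Npos: "\<And>x. N x > 0" and Nanti: "\<And>x y. x \<le> y \<Longrightarrow> N y \<le> N x"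
    and Ncont: "continuous_on UNIV N"
    using H_props[OF assms] unfolding N_def by auto
  have Nrat: "\<And>t. 0 < t \<Longrightarrow> t < 1 \<Longrightarrow> ((\<lambda>x. N x / N (t*x)) \<longlongrightarrow> 0) at_top"
    using assms unfolding H_S_inf_def N_def by auto
  have uniq: "a = b" if "a > 0" "l * a = N a" "b > 0" "l * b = N b" "l > 0" for l a b
  proof (rule ccontr)
    assume "a \<noteq> b"
    then consider "a < b" | "b < a" by linarith
    then show False
    proof cases
      case 1
      hence "l * a < l * b" by (intro mult_strict_left_mono) (use that in auto)
      moreover have "N b \<le> N a" using 1 by (intro Nanti) simp
      ultimately show False using that by linarith
    next
      case 2
      hence "l * b < l * a" by (intro mult_strict_left_mono) (use that in auto)
      moreover have "N a \<le> N b" using 2 by (intro Nanti) simp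
      ultimately show False using that by linarith
    qed
  qed
  have exist: "\<exists>a. a > 0 \<and> l * a = N a" if l: "0 < l" "l \<le> N 1" for l
  proof -
    define A where "A = max 1 (N 1 / l)"
    have A1: "1 \<le> A" unfolding A_def by simp
    have N1: "N 1 > 0" by (rule Npos)
    have c: "continuous_on {1..A} (\<lambda>a. a / N a)"
      by (intro continuous_on_divide continuous_on_id continuous_on_subset[OF Ncont])
         (use Npos in \<open>auto simp: less_imp_neq[symmetric]\<close>)
    have f1: "1 / N 1 \<le> 1 / l" using l N1 by (intro divide_left_mono) auto
    have "1 / l = (N 1 / l) / N 1" using N1 by simp
    also have "\<dots> \<le> A / N 1" using N1 unfolding A_def by (intro divide_right_mono) auto
    also have "\<dots> \<le> A / N A" using A1 Npos[of A] Nanti[OF A1] A1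
      by (intro divide_left_mono) auto
    finally have f2: "1 / l \<le> A / N A" .
    obtain x where x: "1 \<le> x" "x \<le> A" "x / N x = 1 / l"
      using IVT'[of "\<lambda>a. a / N a" 1 "1/l" A] f1 f2 A1 c by auto
    have "l * x = N x" using x(3) Npos[of x] l by (simp add: field_simps)
    thus ?thesis using x by (intro exI[of _ x]) auto
  qed
  have aprop: "a_lam mu l > 0 \<and> l * a_lam mu l = N (a_lam mu l)" if "0 < l" "l \<le> N 1" for l
  proof -
    have "\<exists>!a. a > 0 \<and> l * a = N a" using exist[OF that] uniq that by blast
    hence "(THE a. a > 0 \<and> l * a = N a) > 0 \<and> l * (THE a. a > 0 \<and> l * a = N a) = N (THE a. a > 0 \<and> l * a = N a)"
      by (rule theI')
    thus ?thesis unfolding a_lam_def N_def .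
  qed
  have evsmall: "eventually (\<lambda>l. 0 < l \<and> l < c) (at_right (0::real))" if "c > 0" for c
    unfolding eventually_at_right_field using that by (intro exI[of _ c]) auto
  have aeq: "eventually (\<lambda>l. a_lam mu l > 0 \<and> l * a_lam mu l = N (a_lam mu l)) (at_right 0)"
    using evsmall[OF Npos[of 1]] by eventually_elim (use aprop in auto)
  have alim: "filterlim (a_lam mu) at_top (at_right 0)"
    unfolding filterlim_at_top
  proof
    fix B :: real
    define B' where "B' = max B 1"
    have B'1: "B' \<ge> 1" unfolding B'_def by simp
    have NB: "N B' > 0" by (rule Npos)
    have "eventually (\<lambda>l. 0 < l \<and> l < min (N 1) (N B' / B')) (at_right 0)"
      using NB B'1 Npos[of 1] by (intro evsmall) auto
    then show "eventually (\<lambda>l. B \<le> a_lam mu l) (at_right 0)"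
    proof eventually_elim
      case (elim l)
      have ap: "a_lam mu l > 0" "l * a_lam mu l = N (a_lam mu l)" using aprop[of l] elim by auto
      show ?case
      proof (rule ccontr)
        assume "\<not> B \<le> a_lam mu l"
        hence le: "a_lam mu l \<le> B'" unfolding B'_def by auto
        hence "N B' \<le> l * a_lam mu l" using ap Nanti by metis
        also have "\<dots> \<le> l * B'" using le elim by (intro mult_left_mono) auto
        also have "\<dots> < (N B' / B') * B'" using elim B'1 by (intro mult_strict_right_mono) auto
        also have "\<dots> = N B'" using B'1 by simp
        finally show False by simp
      qed
    qed
  qed
  have amono: "eventually (\<lambda>l. \<forall>l'. 0<l' \<and> l' \<le> l \<longrightarrow> a_lam mu l \<le> a_lam mu l') (at_right 0)"
    using evsmall[OF Npos[of 1]]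
  proof eventually_elim
    case (elim l)
    show ?case
    proof (intro allI impI)
      fix l' assume l': "0 < l' \<and> l' \<le> l"
      have ap: "a_lam mu l > 0" "l * a_lam mu l = N (a_lam mu l)" using aprop[of l] elim by auto
      have ap': "a_lam mu l' > 0" "l' * a_lam mu l' = N (a_lam mu l')" using aprop[of l'] elim l' by auto
      show "a_lam mu l \<le> a_lam mu l'"
      proof (rule ccontr)
        assume "\<not> a_lam mu l \<le> a_lam mu l'"
        hence lt: "a_lam mu l' < a_lam mu l" by simp
        hence "N (a_lam mu l) \<le> N (a_lam mu l')" by (intro Nanti) simp
        moreover have "l' * a_lam mu l' \<le> l * a_lam mu l'" using l' ap' by (intro mult_right_mono) auto
        moreover have "l * a_lam mu l' < l * a_lam mu l" using lt elim by simp
        ultimately show False using ap ap' by linarith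
      qed
    qed
  qed
  show ?thesis
    using core_lemma[OF Npos Nanti Nrat aeq alim amono]
    unfolding n_lam_def N_def .
qed

end
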